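(* Let $\Gamma$ and $\Phi_\Gamma$ be one of the following pairs: (a) $\Gamma=\Gamma(m,1)$ acting on one variable $x$ by $x\mapsto \eta x$ ($\eta$ a primitive $m$-th root of unity, $m\ge 2$), with $\Phi_\Gamma=x^m$; (b) $\Gamma=\Gamma(m,1)$ acting on two variables by $(x,y)\mapsto(\eta x,\eta y)$, with $\Phi_\Gamma=(x+y)^m$; (c) $\Gamma=\Gamma(2r+1,2)$ ($r\ge1$) acting by $(x,y)\mapsto(\eta x,\eta^2y)$ with $\eta$ a primitive $(2r+1)$-th root of unity, with $\Phi_\Gamma=f_{2r+1}(x,y)=x^{2r+1}+y^{2r+1}+\sum_{j=1}^r c(r,j)x^{2r+1-2j}y^j$, where $c(r,j)=\frac{2r+1}{j}\binom{2r-j}{j-1}$; (d) $\Gamma=\Gamma(7)$ acting by $(x,y,z)\mapsto(\eta x,\eta^2y,\eta^4z)$ with $\eta$ a primitive $7$-th root of unity, with $\Phi_\Gamma=F$ given by $F= x^7 + y^7 + z^7 + 14(x^3 y^2 + x^2 z^3 + y^3 z^2 + xyz) + 7(x^5 y + x z^5 + y^5 z + x y^3 + x^3 z + y z^3) + 7( x y^2 z^4 + x^2 y^4 z + x^4 y z^2 + x^2 y^2 z^2)$. Assume $G$ is a $\Gamma$-special polynomial. Then there is a $\Gamma$-invariant polynomial $H$ such that $G=\Phi_\Gamma-H+H\cdot\Phi_\Gamma$.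
   Context: A real polynomial $G$ is $\Gamma$-invariant if $G(\gamma\mathbf{x})=G(\mathbf{x})$ for all $\gamma\in\Gamma$ (the action being as described for each case). $G$ is $\Gamma$-special if it is $\Gamma$-invariant, has only non-negative coefficients, has zero constant term, and equals $1$ on the relevant set: at $x=1$ in case (a), on the line $x+y=1$ in cases (b),(c), and on the plane $x+y+z=1$ in case (d). *)

theory Defs
  imports Complex_Main "HOL-Library.Poly_Mapping"
begin

text \<open>Real polynomials in the variables X_0, X_1, X_2, ... represented as finitely
supported maps from monomials (exponent vectors) to real coefficients.\<close>

type_synonym mpoly = "(nat \<Rightarrow>\<^sub>0 nat) \<Rightarrow>\<^sub>0 real"

definition Var :: "nat \<Rightarrow> mpoly" where
  "Var i = Poly_Mapping.single (Poly_Mapping.single i 1) 1"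

definition Const :: "real \<Rightarrow> mpoly" where
  "Const c = Poly_Mapping.single 0 c"

definition vars :: "mpoly \<Rightarrow> nat set" where
  "vars p = (\<Union>m\<in>Poly_Mapping.keys p. Poly_Mapping.keys m)"

definition eval :: "mpoly \<Rightarrow> (nat \<Rightarrow> 'a::{real_algebra_1,comm_ring_1}) \<Rightarrow> 'a" where
  "eval p x = (\<Sum>mon\<in>Poly_Mapping.keys p.
      of_real (Poly_Mapping.lookup p mon) *
      (\<Prod>i\<in>Poly_Mapping.keys (mon :: nat \<Rightarrow>\<^sub>0 nat). x i ^ Poly_Mapping.lookup mon i))"

text \<open>Invariance under the cyclic group of order n generated by
  (x_i) \<mapsto> (eta^(a i) x_i), eta = exp(2 pi i/n) a primitive n-th root of unity.\<close>
definition invariant :: "nat \<Rightarrow> (nat \<Rightarrow> nat) \<Rightarrow> mpoly \<Rightarrow> bool" where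
  "invariant n a G \<longleftrightarrow>
     (\<forall>j::nat. \<forall>x::nat \<Rightarrow> complex.
        eval G (\<lambda>i. (cis (2 * pi / real n)) ^ (j * a i) * x i) = eval G x)"

text \<open>Gamma-special polynomial in the k variables X_0..X_(k-1): invariant,
  non-negative coefficients, zero constant term, equal to 1 on the hyperplane
  X_0 + ... + X_(k-1) = 1 (for k = 1 this is the point X_0 = 1).\<close>
definition special :: "nat \<Rightarrow> nat \<Rightarrow> (nat \<Rightarrow> nat) \<Rightarrow> mpoly \<Rightarrow> bool" where
  "special k n a G \<longleftrightarrow>
     vars G \<subseteq> {..<k} \<and> invariant n a G \<and>
     (\<forall>m. Poly_Mapping.lookup G m \<ge> 0) \<and> Poly_Mapping.lookup G 0 = 0 \<and>
     (\<forall>x::nat \<Rightarrow> real. (\<Sum>i<k. x i) = 1 \<longrightarrow> eval G x = 1)"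

definition cc :: "nat \<Rightarrow> nat \<Rightarrow> real" where
  "cc r j = real (2*r+1) / real j * real ((2*r - j) choose (j - 1))"

definition f_odd :: "nat \<Rightarrow> mpoly" where
  "f_odd r = Var 0 ^ (2*r+1) + Var 1 ^ (2*r+1)
     + (\<Sum>j=1..r. Const (cc r j) * Var 0 ^ (2*r+1-2*j) * Var 1 ^ j)"

definition Klein_F :: mpoly where
  "Klein_F = (let x = Var 0; y = Var 1; z = Var 2 in
     x^7 + y^7 + z^7
     + Const 14 * (x^3*y^2 + x^2*z^3 + y^3*z^2 + x*y*z)
     + Const 7 * (x^5*y + x*z^5 + y^5*z + x*y^3 + x^3*z + y*z^3)
     + Const 7 * (x*y^2*z^4 + x^2*y^4*z + x^4*y*z^2 + x^2*y^2*z^2))"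

end

theory Submission
  imports Defs
begin


definition monval :: "(nat \<Rightarrow>\<^sub>0 nat) \<Rightarrow> (nat \<Rightarrow> 'a::comm_ring_1) \<Rightarrow> 'a" where
  "monval m x = (\<Prod>i\<in>Poly_Mapping.keys m. x i ^ Poly_Mapping.lookup m i)"

lemma monval_superset:
  assumes "finite S" "Poly_Mapping.keys m \<subseteq> S"
  shows "monval m x = (\<Prod>i\<in>S. x i ^ Poly_Mapping.lookup m i)"
  unfolding monval_def
  by (rule prod.mono_neutral_left) (use assms in \<open>auto simp: in_keys_iff\<close>)

lemma eval_monval: "eval p x = (\<Sum>m\<in>Poly_Mapping.keys p. of_real (Poly_Mapping.lookup p m) * monval m x)"
  unfolding eval_def monval_def ..

lemma eval_superset:
  assumes "finite S" "Poly_Mapping.keys p \<subseteq> S"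
  shows "eval p x = (\<Sum>m\<in>S. of_real (Poly_Mapping.lookup p m) * monval m x)"
  unfolding eval_monval
  by (rule sum.mono_neutral_left) (use assms in \<open>auto simp: in_keys_iff\<close>)

lemma eval_add: "eval (p + q) x = eval p x + eval q x"
proof -
  let ?S = "Poly_Mapping.keys p \<union> Poly_Mapping.keys q"
  have "eval (p+q) x = (\<Sum>m\<in>?S. of_real (Poly_Mapping.lookup (p+q) m) * monval m x)"
    by (rule eval_superset) (auto dest: set_mp[OF keys_add])
  also have "\<dots> = (\<Sum>m\<in>?S. of_real (Poly_Mapping.lookup p m) * monval m x)
     + (\<Sum>m\<in>?S. of_real (Poly_Mapping.lookup q m) * monval m x)"
    by (simp add: lookup_add distrib_right sum.distrib)
  also have "\<dots> = eval p x + eval q x"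
    by (simp add: eval_superset[symmetric])
  finally show ?thesis .
qed

lemma eval_zero[simp]: "eval 0 x = 0"
  by (simp add: eval_def)

lemma eval_uminus: "eval (- p) x = - eval p x"
  by (simp add: eval_def sum_negf)

lemma eval_diff: "eval (p - q) x = eval p x - eval q x"
  using eval_add[of p "-q" x] by (simp add: eval_uminus)

lemma eval_sum: "eval (sum f A) x = (\<Sum>a\<in>A. eval (f a) x)"
  by (induction A rule: infinite_finite_induct) (auto simp: eval_add)

lemma eval_single: "eval (Poly_Mapping.single m c) x = of_real c * monval m x"
  by (simp add: eval_monval)

lemma monval_add: "monval (a + b) x = monval a x * monval b x"
proof -
  let ?S = "Poly_Mapping.keys a \<union> Poly_Mapping.keys b"
  have "monval (a+b) x = (\<Prod>i\<in>?S. x i ^ Poly_Mapping.lookup (a+b) i)"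
    by (rule monval_superset) (auto dest: set_mp[OF keys_add])
  also have "\<dots> = (\<Prod>i\<in>?S. x i ^ Poly_Mapping.lookup a i) * (\<Prod>i\<in>?S. x i ^ Poly_Mapping.lookup b i)"
    by (simp add: lookup_add power_add prod.distrib)
  also have "\<dots> = monval a x * monval b x"
    by (simp add: monval_superset[symmetric])
  finally show ?thesis .
qed

lemma monval_zero[simp]: "monval 0 x = 1"
  by (simp add: monval_def)

lemma poly_mapping_expand:
  "p = (\<Sum>m\<in>Poly_Mapping.keys p. Poly_Mapping.single m (Poly_Mapping.lookup p m))"
  by (rule poly_mapping_eqI)
     (simp add: lookup_sum lookup_single when_def in_keys_iff sum.delta)

lemma eval_mult: "eval (p * q) x = eval p x * eval q x"
proof -
  have "p * q = (\<Sum>a\<in>Poly_Mapping.keys p. \<Sum>b\<in>Poly_Mapping.keys q.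
      Poly_Mapping.single a (Poly_Mapping.lookup p a) * Poly_Mapping.single b (Poly_Mapping.lookup q b))"
    by (subst poly_mapping_expand[of p], subst poly_mapping_expand[of q]) (simp add: sum_product)
  then have "eval (p*q) x = (\<Sum>a\<in>Poly_Mapping.keys p. \<Sum>b\<in>Poly_Mapping.keys q.
      of_real (Poly_Mapping.lookup p a) * monval a x * (of_real (Poly_Mapping.lookup q b) * monval b x))"
    by (simp add: eval_sum mult_single eval_single monval_add mult_ac)
  also have "\<dots> = eval p x * eval q x"
    by (simp add: eval_monval sum_product)
  finally show ?thesis .
qed

lemma eval_one[simp]: "eval 1 x = 1"
  by (simp add: eval_monval)

lemma eval_power: "eval (p ^ n) x = eval p x ^ n"
  by (induction n) (auto simp: eval_mult)

lemma eval_Var[simp]: "eval (Var i) x = x i"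
  by (simp add: Var_def eval_single monval_def)

lemma eval_Const[simp]: "eval (Const c) x = of_real c"
  by (simp add: Const_def eval_single)

lemma eval_of_nat[simp]: "eval (of_nat n) x = of_nat n"
  by (induction n) (auto simp: eval_add)

lemma eval_numeral[simp]: "eval (numeral n) x = numeral n"
  by (metis eval_of_nat of_nat_numeral)

lemma eval_prod: "eval (prod f A) x = (\<Prod>a\<in>A. eval (f a) x)"
  by (induction A rule: infinite_finite_induct) (auto simp: eval_mult)

lemmas eval_simps = eval_add eval_diff eval_uminus eval_mult eval_power eval_sum eval_prod



lemma vars_add_sub: "vars (p + q) \<subseteq> vars p \<union> vars q"
  unfolding vars_def using keys_add[of p q] by auto

lemma vars_add: "vars p \<subseteq> A \<Longrightarrow> vars q \<subseteq> A \<Longrightarrow> vars (p + q) \<subseteq> A"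
  using vars_add_sub[of p q] by auto

lemma vars_uminus: "vars p \<subseteq> A \<Longrightarrow> vars (- p) \<subseteq> A"
  unfolding vars_def by simp

lemma vars_diff_sub: "vars (p - q) \<subseteq> vars p \<union> vars q"
  unfolding vars_def using keys_diff[of p q] by auto

lemma vars_diff: "vars p \<subseteq> A \<Longrightarrow> vars q \<subseteq> A \<Longrightarrow> vars (p - q) \<subseteq> A"
  using vars_diff_sub[of p q] by auto

lemma vars_mult_sub: "vars (p * q) \<subseteq> vars p \<union> vars q"
proof
  fix i assume "i \<in> vars (p * q)"
  then obtain m where m: "m \<in> Poly_Mapping.keys (p * q)" "i \<in> Poly_Mapping.keys m"
    unfolding vars_def by auto
  from m(1) have "m \<in> {a + b | a b. a \<in> Poly_Mapping.keys p \<and> b \<in> Poly_Mapping.keys q}"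
    by (rule subsetD[OF keys_mult])
  then obtain a b where ab: "m = a + b" "a \<in> Poly_Mapping.keys p" "b \<in> Poly_Mapping.keys q" by auto
  have "i \<in> Poly_Mapping.keys a \<union> Poly_Mapping.keys b"
    using m(2) keys_add[of a b] ab(1) by auto
  then show "i \<in> vars p \<union> vars q" using ab unfolding vars_def by auto
qed

lemma vars_mult: "vars p \<subseteq> A \<Longrightarrow> vars q \<subseteq> A \<Longrightarrow> vars (p * q) \<subseteq> A"
  using vars_mult_sub[of p q] by auto

lemma vars_0[simp]: "vars 0 = {}" by (simp add: vars_def)
lemma vars_1[simp]: "vars 1 = {}" by (simp add: vars_def)
lemma vars_zero: "vars 0 \<subseteq> A" by simp
lemma vars_one: "vars 1 \<subseteq> A" by simp
lemma vars_Const: "vars (Const c) \<subseteq> A" by (simp add: vars_def Const_def)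
lemma vars_Var: "i \<in> A \<Longrightarrow> vars (Var i) \<subseteq> A" by (simp add: vars_def Var_def)
lemma vars_power: "vars p \<subseteq> A \<Longrightarrow> vars (p ^ n) \<subseteq> A"
  by (induction n) (simp_all add: vars_mult)
lemma vars_sum: "(\<And>a. a \<in> S \<Longrightarrow> vars (f a) \<subseteq> A) \<Longrightarrow> vars (sum f S) \<subseteq> A"
  by (induction S rule: infinite_finite_induct) (simp_all add: vars_add)
lemma vars_prod: "(\<And>a. a \<in> S \<Longrightarrow> vars (f a) \<subseteq> A) \<Longrightarrow> vars (prod f S) \<subseteq> A"
  by (induction S rule: infinite_finite_induct) (simp_all add: vars_mult)
lemma vars_numeral: "vars (numeral n) \<subseteq> A"
  by (metis Const_def vars_Const single_numeral)
lemma vars_of_nat: "vars (of_nat n) \<subseteq> A"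
  by (metis Const_def vars_Const single_of_nat)

lemmas vars_intros = vars_add vars_uminus vars_diff vars_mult vars_zero vars_one vars_Const
  vars_Var vars_power vars_sum vars_prod vars_numeral vars_of_nat

lemma eval_cong:
  assumes "\<And>i. i \<in> vars p \<Longrightarrow> x i = y i"
  shows "eval p x = eval p y"
  unfolding eval_def
proof (intro sum.cong refl arg_cong2[where f="(*)"] prod.cong)
  fix m i assume "m \<in> Poly_Mapping.keys p" "i \<in> Poly_Mapping.keys m"
  then have "i \<in> vars p" by (auto simp: vars_def)
  then show "x i ^ Poly_Mapping.lookup m i = y i ^ Poly_Mapping.lookup m i" using assms by simp
qed

lemma Var_power: "Var i ^ e = Poly_Mapping.single (Poly_Mapping.single i e) 1"
  by (induction e) (auto simp: Var_def mult_single single_add[symmetric] add.commute)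

lemma keys_subset_vars: "m \<in> Poly_Mapping.keys p \<Longrightarrow> Poly_Mapping.keys m \<subseteq> vars p"
  by (auto simp: vars_def)

lemma sub_Suc: "A \<subseteq> {..<k} \<Longrightarrow> A \<subseteq> {..<Suc k}" by auto

definition low :: "nat \<Rightarrow> nat \<Rightarrow> mpoly \<Rightarrow> bool" where
  "low k n p \<longleftrightarrow> (\<exists>c. (\<forall>i. vars (c i) \<subseteq> {..<k}) \<and> p = (\<Sum>i<n. c i * Var k ^ i))"

lemma low_zero: "low k n 0"
  unfolding low_def by (rule exI[of _ "\<lambda>_. 0"]) simp

lemma low_add: assumes "low k n p" "low k n q" shows "low k n (p + q)"
proof -
  from assms obtain c d where c: "\<forall>i. vars (c i) \<subseteq> {..<k}" "p = (\<Sum>i<n. c i * Var k ^ i)"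
    and d: "\<forall>i. vars (d i) \<subseteq> {..<k}" "q = (\<Sum>i<n. d i * Var k ^ i)" unfolding low_def by blast
  show ?thesis unfolding low_def
  proof (intro exI conjI)
    show "\<forall>i. vars (c i + d i) \<subseteq> {..<k}" using c(1) d(1) vars_add by blast
    show "p + q = (\<Sum>i<n. (c i + d i) * Var k ^ i)"
      unfolding c(2) d(2) by (simp add: distrib_right sum.distrib)
  qed
qed

lemma low_cmult: assumes "low k n p" "vars q \<subseteq> {..<k}" shows "low k n (q * p)"
proof -
  from assms obtain c where c: "\<forall>i. vars (c i) \<subseteq> {..<k}" "p = (\<Sum>i<n. c i * Var k ^ i)"
    unfolding low_def by blast
  show ?thesis unfolding low_def
  proof (intro exI conjI)
    show "\<forall>i. vars (q * c i) \<subseteq> {..<k}" using c(1) assms(2) vars_mult by blast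
    show "q * p = (\<Sum>i<n. (q * c i) * Var k ^ i)"
      unfolding c(2) by (simp add: sum_distrib_left mult.assoc)
  qed
qed

lemma low_uminus: assumes "low k n p" shows "low k n (- p)"
  using low_cmult[OF assms, of "-1"] by (simp add: vars_intros)

lemma low_diff: assumes "low k n p" "low k n q" shows "low k n (p - q)"
  using low_add[OF assms(1) low_uminus[OF assms(2)]] by simp

lemma low_term: assumes "vars q \<subseteq> {..<k}" "i < n" shows "low k n (q * Var k ^ i)"
  unfolding low_def
proof (rule exI[of _ "\<lambda>j. if j = i then q else 0"], intro conjI allI)
  fix j show "vars (if j = i then q else 0) \<subseteq> {..<k}" using assms by simp
next
  have "(\<Sum>j<n. (if j = i then q else 0) * Var k ^ j) = (\<Sum>j<n. if j = i then q * Var k ^ j else 0)"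
    by (rule sum.cong) auto
  also have "\<dots> = q * Var k ^ i" using assms(2) by (simp add: sum.delta')
  finally show "q * Var k ^ i = (\<Sum>j<n. (if j = i then q else 0) * Var k ^ j)" by simp
qed

lemma low_const: assumes "vars q \<subseteq> {..<k}" "0 < n" shows "low k n q"
  using low_term[OF assms] by simp

lemma low_mono: assumes "low k n p" "n \<le> n'" shows "low k n' p"
proof -
  from assms obtain c where c: "\<forall>i. vars (c i) \<subseteq> {..<k}" "p = (\<Sum>i<n. c i * Var k ^ i)"
    unfolding low_def by blast
  show ?thesis unfolding low_def
  proof (rule exI[of _ "\<lambda>i. if i < n then c i else 0"], intro conjI allI)
    fix i show "vars (if i < n then c i else 0) \<subseteq> {..<k}" using c by (auto intro: vars_intros)
  next
    have "(\<Sum>i<n'. (if i < n then c i else 0) * Var k ^ i) = (\<Sum>i<n. c i * Var k ^ i)"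
      by (rule sum.mono_neutral_cong_right) (use assms in auto)
    then show "p = (\<Sum>i<n'. (if i < n then c i else 0) * Var k ^ i)" using c by simp
  qed
qed

lemma low_sum: "(\<And>a. a \<in> S \<Longrightarrow> low k n (f a)) \<Longrightarrow> low k n (sum f S)"
  by (induction S rule: infinite_finite_induct) (auto intro: low_zero low_add)

lemma low_shift: assumes "low k n p" shows "low k (n + e) (p * Var k ^ e)"
proof -
  from assms obtain c where c: "\<forall>i. vars (c i) \<subseteq> {..<k}" "p = (\<Sum>i<n. c i * Var k ^ i)"
    unfolding low_def by blast
  have "p * Var k ^ e = (\<Sum>i<n. c i * Var k ^ (i + e))"
    by (simp add: c sum_distrib_right power_add mult.assoc)
  moreover have "low k (n + e) (\<Sum>i<n. c i * Var k ^ (i + e))"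
  proof (rule low_sum)
    fix i assume "i \<in> {..<n}"
    then show "low k (n + e) (c i * Var k ^ (i + e))"
      using c(1) by (intro low_term) auto
  qed
  ultimately show ?thesis by simp
qed

lemma low_vars: assumes "low k n p" shows "vars p \<subseteq> {..<Suc k}"
proof -
  from assms obtain c where c: "\<forall>i. vars (c i) \<subseteq> {..<k}" "p = (\<Sum>i<n. c i * Var k ^ i)"
    unfolding low_def by blast
  have "vars (c i * Var k ^ i) \<subseteq> {..<Suc k}" for i
    by (rule vars_mult[OF sub_Suc[OF c(1)[rule_format]] vars_power[OF vars_Var]]) simp
  then show ?thesis unfolding c(2) by (intro vars_sum)
qed


lemma decomp_single:
  assumes "Poly_Mapping.keys m \<subseteq> {..<Suc k}"
  shows "low k (Suc (Poly_Mapping.lookup m k)) (Poly_Mapping.single m c)"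
proof -
  let ?m' = "Poly_Mapping.update k 0 m"
  have meq: "m = ?m' + Poly_Mapping.single k (Poly_Mapping.lookup m k)"
    by (rule poly_mapping_eqI) (auto simp: lookup_add lookup_update lookup_single when_def)
  have "Poly_Mapping.single m c = Poly_Mapping.single ?m' c * Var k ^ (Poly_Mapping.lookup m k)"
    by (subst meq) (simp add: Var_power mult_single)
  moreover have "vars (Poly_Mapping.single ?m' c) \<subseteq> {..<k}"
    using assms by (auto simp: vars_def keys_update in_keys_iff lookup_update split: if_splits)
  ultimately show ?thesis by (auto intro: low_term)
qed

lemma decomp:
  assumes "vars p \<subseteq> {..<Suc k}"
  shows "\<exists>N. low k N p"
proof -
  define N where "N = Suc (Max ((\<lambda>m. Poly_Mapping.lookup m k) ` Poly_Mapping.keys p))"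
  have "low k N p"
  proof (subst poly_mapping_expand, rule low_sum)
    fix m assume m: "m \<in> Poly_Mapping.keys p"
    then have "Poly_Mapping.keys m \<subseteq> {..<Suc k}" using assms keys_subset_vars by blast
    moreover have "Suc (Poly_Mapping.lookup m k) \<le> N" unfolding N_def using m by auto
    ultimately show "low k N (Poly_Mapping.single m (Poly_Mapping.lookup p m))"
      using decomp_single low_mono by blast
  qed
  then show ?thesis ..
qed

lemma division:
  assumes L: "low k n L" and p: "low k N p"
  shows "\<exists>Q. vars Q \<subseteq> {..<Suc k} \<and> low k n (p - Q * (Var k ^ n + L))"
  using p
proof (induction N arbitrary: p)
  case 0
  then show ?case using low_mono[of k 0 p n] by (intro exI[of _ 0]) simp
next
  case (Suc N p)
  show ?case
  proof (cases "Suc N \<le> n")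
    case True
    then show ?thesis using Suc.prems low_mono[of k "Suc N" p n] by (intro exI[of _ 0]) simp
  next
    case False
    from Suc.prems obtain c where c: "\<forall>i. vars (c i) \<subseteq> {..<k}" "p = (\<Sum>i<Suc N. c i * Var k ^ i)"
      unfolding low_def by blast
    define p' where "p' = (\<Sum>i<N. c i * Var k ^ i)"
    have lp': "low k N p'" unfolding p'_def low_def using c(1) by blast
    define e where "e = N - n"
    have Ne: "N = n + e" using False by (simp add: e_def)
    have "low k N (c N * (L * Var k ^ e))"
      using low_cmult[OF low_shift[OF L, of e] c(1)[rule_format, of N]] Ne by simp
    then have l2: "low k N (p' - c N * (L * Var k ^ e))" by (rule low_diff[OF lp'])
    from Suc.IH[OF l2] obtain Q' where Q': "vars Q' \<subseteq> {..<Suc k}"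
      "low k n (p' - c N * (L * Var k ^ e) - Q' * (Var k ^ n + L))" by blast
    define Q where "Q = Q' + c N * Var k ^ e"
    have "p - Q * (Var k ^ n + L) = p' - c N * (L * Var k ^ e) - Q' * (Var k ^ n + L)"
      unfolding Q_def c(2) p'_def using Ne by (simp add: algebra_simps power_add)
    moreover have "vars Q \<subseteq> {..<Suc k}" unfolding Q_def using Q'(1) c(1)
      by (intro vars_intros) (use c(1) sub_Suc in auto)
    ultimately show ?thesis using Q'(2) by auto
  qed
qed



lemma ident:
  fixes p :: mpoly
  assumes "vars p \<subseteq> {..<k}" "\<And>x::nat \<Rightarrow> 'a::real_normed_field. eval p x = 0"
  shows "p = 0"
  using assms
proof (induction k arbitrary: p)
  case 0
  have m0: "m = 0" if "m \<in> Poly_Mapping.keys p" for m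
  proof -
    have "Poly_Mapping.keys m \<subseteq> {}" using keys_subset_vars[OF that] 0(1) by simp
    then show ?thesis by simp
  qed
  have keys0: "Poly_Mapping.keys p \<subseteq> {0}"
    using m0 by auto
  have "eval p (\<lambda>_. 0::'a) = of_real (Poly_Mapping.lookup p 0)"
    by (subst eval_superset[OF _ keys0]) auto
  then have l0: "Poly_Mapping.lookup p 0 = 0" using 0(2)[of "\<lambda>_. 0"] by simp
  show ?case
  proof (rule poly_mapping_eqI)
    fix m show "Poly_Mapping.lookup p m = Poly_Mapping.lookup 0 m"
    proof (cases "m = 0")
      case True then show ?thesis using l0 by simp
    next
      case False then have "m \<notin> Poly_Mapping.keys p" using m0 by blast
      then show ?thesis by (simp add: in_keys_iff)
    qed
  qed
next
  case (Suc k p)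
  obtain N where "low k N p" using decomp[OF Suc.prems(1)] by blast
  then have "low k (Suc N) p" using low_mono by simp
  then obtain c where c: "\<forall>i. vars (c i) \<subseteq> {..<k}" "p = (\<Sum>i<Suc N. c i * Var k ^ i)"
    unfolding low_def by blast
  have ci: "c i = 0" if "i \<le> N" for i
  proof (rule Suc.IH[OF c(1)[rule_format]])
    fix x :: "nat \<Rightarrow> 'a"
    have "\<forall>t. (\<Sum>i\<le>N. eval (c i) x * t ^ i) = 0"
    proof
      fix t
      have "0 = eval p (x(k := t))" using Suc.prems(2) by simp
      also have "\<dots> = (\<Sum>i<Suc N. eval (c i) (x(k := t)) * t ^ i)"
        unfolding c(2) eval_sum eval_mult eval_power eval_Var by simp
      also have "\<dots> = (\<Sum>i\<le>N. eval (c i) x * t ^ i)"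
        unfolding lessThan_Suc_atMost
      proof (rule sum.cong[OF refl])
        fix i
        have "eval (c i) (x(k := t)) = eval (c i) x"
          by (rule eval_cong) (use c(1) in auto)
        then show "eval (c i) (x(k := t)) * t ^ i = eval (c i) x * t ^ i" by simp
      qed
      finally show "(\<Sum>i\<le>N. eval (c i) x * t ^ i) = 0" by simp
    qed
    then have "\<forall>i\<le>N. eval (c i) x = 0" by (simp only: polyfun_eq_0)
    then show "eval (c i) x = 0" using that by simp
  qed
  have "p = (\<Sum>i<Suc N. 0 * Var k ^ i)" unfolding c(2)
    by (rule sum.cong[OF refl]) (use ci in auto)
  then show ?case by simp
qed



lemma isCont_eval:
  fixes g :: "nat \<Rightarrow> complex \<Rightarrow> complex"
  assumes "\<And>i. isCont (g i) t0"
  shows "isCont (\<lambda>t. eval p (\<lambda>i. g i t)) t0"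
  unfolding eval_def using assms by (auto intro!: continuous_intros)

lemma isCont_upd: "isCont (\<lambda>t. (x(k := t)) i) t0"
  by (cases "i = k") auto



lemma zero_off_finite:
  fixes f :: "complex \<Rightarrow> complex"
  assumes "isCont f t" "finite B" "\<And>s. s \<notin> B \<Longrightarrow> f s = 0"
  shows "f t = 0"
proof -
  have ev: "eventually (\<lambda>s. s \<notin> B) (at t)"
  proof -
    have "\<forall>b\<in>B. eventually (\<lambda>s. s \<noteq> b) (at t)"
    proof
      fix b assume "b \<in> B"
      show "eventually (\<lambda>s. s \<noteq> b) (at t)"
      proof (cases "b = t")
        case True then show ?thesis by (simp add: eventually_at_filter)
      next
        case False
        then have "eventually (\<lambda>s. s \<noteq> b) (nhds t)" by (intro t1_space_nhds) auto
        then show ?thesis by (simp add: eventually_at_filter eventually_mono)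
      qed
    qed
    then have "eventually (\<lambda>s. \<forall>b\<in>B. s \<noteq> b) (at t)"
      by (rule eventually_ball_finite[OF assms(2)])
    then show ?thesis by (rule eventually_mono) auto
  qed
  have "(f \<longlongrightarrow> f t) (at t)" using assms(1) isCont_def by blast
  then have "((\<lambda>_. 0) \<longlongrightarrow> f t) (at t)"
    by (rule Lim_transform_eventually) (use ev assms(3) in \<open>auto elim: eventually_mono\<close>)
  then show ?thesis using LIM_const_eq by metis
qed



definition omega :: "nat \<Rightarrow> complex" where
  "omega n = cis (2 * pi / real n)"

lemma omega_pow: "omega n ^ j = cis (2 * pi * real j / real n)"
  unfolding omega_def DeMoivre by (rule arg_cong[where f=cis]) (simp add: field_simps)

lemma omega_nz[simp]: "omega n ^ j \<noteq> 0"
  by (simp add: omega_def)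

lemma omega_nz0[simp]: "omega n \<noteq> 0"
  by (simp add: omega_def)

lemma omega_n: "n > 0 \<Longrightarrow> omega n ^ n = 1"
  by (simp add: omega_pow)

lemma omega_eq_1: assumes "n > 0" shows "omega n ^ j = 1 \<longleftrightarrow> n dvd j"
proof
  assume "n dvd j"
  then obtain q where "j = n * q" by blast
  then show "omega n ^ j = 1" by (simp add: power_mult omega_n[OF assms])
next
  assume h: "omega n ^ j = 1"
  define r where "r = j mod n"
  have "j = n * (j div n) + r" by (simp add: r_def)
  then have "omega n ^ j = omega n ^ (n * (j div n)) * omega n ^ r" by (metis power_add)
  then have "omega n ^ j = omega n ^ r" by (simp add: power_mult omega_n[OF assms])
  with h have "cis (2 * pi * real r / real n) = 1" by (simp add: omega_pow)
  then have "cos (2 * pi * real r / real n) = 1" by (metis cis.sel(1) one_complex.sel(1))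
  from cos_one_2pi_int[THEN iffD1, OF this]
  obtain z :: int where z: "2 * pi * real r / real n = real_of_int z * 2 * pi" by blast
  then have "real r / real n = z" using z assms pi_gt_zero by (auto simp: field_simps)
  moreover have "0 \<le> real r / real n" "real r / real n < 1" using assms by (auto simp: r_def)
  ultimately have "z = 0" by linarith
  then have "r = 0" using z assms by simp
  then show "n dvd j" unfolding r_def by (simp add: dvd_eq_mod_eq_0)
qed

lemma omega_inj: assumes "n > 0" "j < n" "l < n" "omega n ^ j = omega n ^ l" shows "j = l"
proof -
  have *: "j = l" if "j \<le> l" "l < n" "omega n ^ j = omega n ^ l" for j l
  proof -
    have "omega n ^ l = omega n ^ j * omega n ^ (l - j)" using that by (metis le_add_diff_inverse power_add)
    then have "omega n ^ (l - j) = 1" using that(3) by simp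
    then have "n dvd (l - j)" using omega_eq_1[OF assms(1)] by blast
    then show ?thesis using that by (metis diff_less_mono2 le_antisym dvd_imp_le less_imp_diff_less not_less zero_less_diff)
  qed
  show ?thesis using *[of j l] *[of l j] assms by (cases "j \<le> l") auto
qed



lemma invariant_omega:
  "invariant n a G \<longleftrightarrow> (\<forall>j x. eval G (\<lambda>i. omega n ^ (j * a i) * x i) = eval G x)"
  by (simp add: invariant_def omega_def)

lemma low1_vars: assumes "low k 1 r" shows "vars r \<subseteq> {..<k}"
proof -
  from assms obtain c where c: "\<forall>i. vars (c i) \<subseteq> {..<k}" "r = (\<Sum>i<1. c i * Var k ^ i)"
    unfolding low_def by blast
  then show ?thesis by simp
qed

lemma eval_low:
  assumes "\<forall>i. vars (c i) \<subseteq> {..<k}"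
  shows "eval (\<Sum>i<n. c i * Var k ^ i) (x(k := t)) = (\<Sum>i<n. eval (c i) x * t ^ i)"
proof -
  have "eval (\<Sum>i<n. c i * Var k ^ i) (x(k := t)) = (\<Sum>i<n. eval (c i) (x(k := t)) * t ^ i)"
    unfolding eval_sum eval_mult eval_power eval_Var by simp
  also have "\<dots> = (\<Sum>i<n. eval (c i) x * t ^ i)"
  proof (rule sum.cong[OF refl])
    fix i
    have "eval (c i) (x(k := t)) = eval (c i) x"
      by (rule eval_cong) (use assms in auto)
    then show "eval (c i) (x(k := t)) * t ^ i = eval (c i) x * t ^ i" by simp
  qed
  finally show ?thesis .
qed

lemma sum_upd_lt: "(\<Sum>i<(k::nat). f i ((x(k := t)) i)) = (\<Sum>i<k. f i (x i))"
  by (rule sum.cong[OF refl]) (auto simp: fun_upd_def)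

theorem main_thm:
  fixes k n :: nat and a :: "nat \<Rightarrow> nat" and Phi L G :: mpoly
  assumes n: "n > 0"
    and L: "low k n L" and Phieq: "Phi = 1 + Var k ^ n + L"
    and Phiinv: "invariant n a Phi"
    and Phione: "\<And>x::nat\<Rightarrow>complex. (\<Sum>i<Suc k. x i) = 1 \<Longrightarrow> eval Phi x = 1"
    and gen: "\<And>c. vars c \<subseteq> {..<k} \<Longrightarrow>
       (\<And>w. inj_on (\<lambda>j. (1 - (\<Sum>i<k. omega n ^ (j * a i) * w i)) / omega n ^ (j * a k)) {..<n}
          \<Longrightarrow> eval c w = 0) \<Longrightarrow> c = 0"
    and G: "special (Suc k) n a G"
  shows "\<exists>H. vars H \<subseteq> {..<Suc k} \<and> invariant n a H \<and> G = Phi - H + H * Phi"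
proof -
  from G have Gvars: "vars G \<subseteq> {..<Suc k}" and Ginv: "invariant n a G"
    and Greal: "\<And>x::nat\<Rightarrow>real. (\<Sum>i<Suc k. x i) = 1 \<Longrightarrow> eval G x = 1"
    unfolding special_def by auto
  have Ginv': "eval G (\<lambda>i. omega n ^ (j * a i) * x i) = eval G x" for j x
    using Ginv unfolding invariant_omega by blast
  have Phiinv': "eval Phi (\<lambda>i. omega n ^ (j * a i) * x i) = eval Phi x" for j x
    using Phiinv unfolding invariant_omega by blast
  (* Step 1: G = 1 on the complex hyperplane *)
  define Ll where "Ll = (\<Sum>i<k. Var i) - 1"
  have Llvars: "vars Ll \<subseteq> {..<k}" unfolding Ll_def
    by (intro vars_diff vars_sum vars_Var vars_one) auto
  have lowLl: "low k 1 Ll" by (rule low_const[OF Llvars]) simp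
  obtain N where "low k N G" using decomp[OF Gvars] by blast
  then obtain Q0 where Q0: "low k 1 (G - Q0 * (Var k ^ 1 + Ll))"
    using division[OF lowLl] by blast
  define r where "r = G - Q0 * (Var k ^ 1 + Ll)"
  have rvars: "vars r \<subseteq> {..<k}" using low1_vars Q0 unfolding r_def by blast
  have evLl: "eval (Var k ^ 1 + Ll) x = (\<Sum>i<Suc k. x i) - 1" for x :: "nat \<Rightarrow> 'b::{real_algebra_1,comm_ring_1}"
    unfolding Ll_def by (simp add: eval_simps)
  have "r - 1 = 0"
  proof (rule ident[where 'a=real])
    show "vars (r - 1) \<subseteq> {..<k}" using rvars by (intro vars_diff vars_one)
  next
    fix w :: "nat \<Rightarrow> real"
    define x where "x = w(k := 1 - (\<Sum>i<k. w i))"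
    have sx: "(\<Sum>i<Suc k. x i) = 1" unfolding x_def by (simp add: sum_upd_lt)
    have "eval r x = 1" unfolding r_def using Greal[OF sx] evLl[of x] sx by (simp add: eval_simps)
    moreover have "eval r w = eval r x"
      by (rule eval_cong) (use rvars in \<open>auto simp: x_def\<close>)
    ultimately show "eval (r - 1) w = 0" by (simp add: eval_simps)
  qed
  then have Geq0: "G = 1 + Q0 * (Var k ^ 1 + Ll)" unfolding r_def by (simp add: algebra_simps)
  have Gc: "eval G x = 1" if "(\<Sum>i<Suc k. x i) = 1" for x :: "nat \<Rightarrow> complex"
    using that evLl[of x] by (subst Geq0) (simp add: eval_simps)
  have Gorb: "eval G x = 1" if "(\<Sum>i<Suc k. omega n ^ (j * a i) * x i) = 1" for j x
    using Gc[OF that] Ginv'[of j x] by simp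
  have Phiorb: "eval Phi x = 1" if "(\<Sum>i<Suc k. omega n ^ (j * a i) * x i) = 1" for j x
    using Phione[OF that] Phiinv'[of j x] by simp
  have "vars (G - 1) \<subseteq> {..<Suc k}" using Gvars by (intro vars_diff vars_one)
  then obtain N1 where "low k N1 (G - 1)" using decomp by blast
  then obtain Q where Qvars: "vars Q \<subseteq> {..<Suc k}" and lowR: "low k n (G - 1 - Q * (Var k ^ n + L))"
    using division[OF L] by blast
  then obtain c where c: "\<forall>i. vars (c i) \<subseteq> {..<k}"
    "G - 1 - Q * (Var k ^ n + L) = (\<Sum>i<n. c i * Var k ^ i)"
    unfolding low_def by blast
  have PhiL: "eval (Var k ^ n + L) x = eval Phi x - 1" for x :: "nat \<Rightarrow> complex"
    unfolding Phieq by (simp add: eval_simps)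
  have czero: "c i = 0" if "i < n" for i
  proof (rule gen[OF c(1)[rule_format]])
    fix w :: "nat \<Rightarrow> complex"
    define v where "v j = (1 - (\<Sum>i<k. omega n ^ (j * a i) * w i)) / omega n ^ (j * a k)" for j
    assume inj: "inj_on (\<lambda>j. (1 - (\<Sum>i<k. omega n ^ (j * a i) * w i)) / omega n ^ (j * a k)) {..<n}"
    then have inj': "inj_on v {..<n}" unfolding v_def .
    have root: "(\<Sum>i<n. eval (c i) w * v j ^ i) = 0" for j
    proof -
      define x where "x = w(k := v j)"
      have "(\<Sum>i<Suc k. omega n ^ (j * a i) * x i) = 1"
        unfolding x_def by (simp add: sum_upd_lt v_def)
      then have "eval G x = 1" "eval Phi x = 1" using Gorb Phiorb by auto
      then have "eval (G - 1 - Q * (Var k ^ n + L)) x = 0" using PhiL[of x] by (simp add: eval_simps)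
      then show ?thesis unfolding c(2) x_def eval_low[OF c(1)] .
    qed
    obtain n' where n': "n = Suc n'" using n by (cases n) auto
    show "eval (c i) w = 0"
    proof (rule ccontr)
      assume nz: "eval (c i) w \<noteq> 0"
      have il: "i \<le> n'" using that n' by simp
      let ?S = "{z. (\<Sum>i\<le>n'. eval (c i) w * z ^ i) = 0}"
      have fin: "finite ?S" and cardS: "card ?S \<le> n'"
        using polyfun_roots_finite[of "\<lambda>i. eval (c i) w", OF nz il]
          polyfun_roots_card[of "\<lambda>i. eval (c i) w", OF nz il] by auto
      have "v ` {..<n} \<subseteq> ?S" using root unfolding n' lessThan_Suc_atMost by auto
      then have "card (v ` {..<n}) \<le> card ?S" by (rule card_mono[OF fin])
      moreover have "card (v ` {..<n}) = n" using card_image[OF inj'] by simp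
      ultimately show False using cardS n' by simp
    qed
  qed
  have "(\<Sum>i<n. c i * Var k ^ i) = 0" using czero by simp
  then have GQ: "G = 1 + Q * (Phi - 1)" using c(2) unfolding Phieq by (simp add: algebra_simps)
  have Qinv: "eval Q (\<lambda>i. omega n ^ (j * a i) * x i) = eval Q x" for j x
  proof -
    define f where "f t = eval Q (\<lambda>i. omega n ^ (j * a i) * (x(k := t)) i) - eval Q (x(k := t))" for t
    from L obtain l where l: "\<forall>i. vars (l i) \<subseteq> {..<k}" "L = (\<Sum>i<n. l i * Var k ^ i)"
      unfolding low_def by blast
    define cf where "cf i = (if i = n then 1 else eval (l i) x)" for i
    have Phit: "eval Phi (x(k := t)) - 1 = (\<Sum>i\<le>n. cf i * t ^ i)" for t
    proof -
      have "eval Phi (x(k := t)) - 1 = t ^ n + (\<Sum>i<n. eval (l i) x * t ^ i)"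
        unfolding Phieq l(2) eval_add eval_one eval_power eval_Var eval_low[OF l(1)] by simp
      also have "\<dots> = (\<Sum>i\<le>n. cf i * t ^ i)"
        unfolding lessThan_Suc_atMost[symmetric] cf_def by simp
      finally show ?thesis .
    qed
    define B where "B = {t. (\<Sum>i\<le>n. cf i * t ^ i) = 0}"
    have finB: "finite B" unfolding B_def
      by (rule polyfun_roots_finite[of cf n n]) (simp_all add: cf_def)
    have fz: "f t = 0" if "t \<notin> B" for t
    proof -
      define y where "y = (\<lambda>i. omega n ^ (j * a i) * (x(k := t)) i)"
      define xt where "xt = x(k := t)"
      have e1: "eval G y = 1 + eval Q y * (eval Phi y - 1)"
        by (subst GQ) (simp add: eval_simps)
      have e2: "eval G xt = 1 + eval Q xt * (eval Phi xt - 1)"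
        by (subst GQ) (simp add: eval_simps)
      have i1: "eval G y = eval G xt" "eval Phi y = eval Phi xt"
        unfolding y_def xt_def by (rule Ginv', rule Phiinv')
      have "eval Q y * (eval Phi xt - 1) = eval Q xt * (eval Phi xt - 1)"
        using e1 e2 i1 by (metis add_left_cancel)
      then have "(eval Q y - eval Q xt) * (eval Phi xt - 1) = 0"
        by (simp add: algebra_simps)
      then have "(eval Q y - eval Q (x(k := t))) * (eval Phi (x(k := t)) - 1) = 0"
        unfolding xt_def .
      moreover have "eval Phi (x(k := t)) - 1 \<noteq> 0" using that Phit unfolding B_def by auto
      ultimately show ?thesis unfolding f_def y_def by simp
    qed
    have "isCont f (x k)" unfolding f_def
      by (intro continuous_intros isCont_eval isCont_upd)
    then have "f (x k) = 0" using zero_off_finite finB fz by blast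
    then show ?thesis unfolding f_def by simp
  qed
  show ?thesis
  proof (intro exI conjI)
    show "vars (Q - 1) \<subseteq> {..<Suc k}" using Qvars by (intro vars_diff vars_one)
    show "invariant n a (Q - 1)" unfolding invariant_omega using Qinv by (simp add: eval_simps)
    show "G = Phi - (Q - 1) + (Q - 1) * Phi" by (subst GQ) (simp add: algebra_simps)
  qed
qed



lemma omega_pow_n: "n > 0 \<Longrightarrow> (omega n ^ j) ^ n = 1"
  by (metis omega_n power_mult mult.commute power_one)

lemma finite_bad:
  fixes \<alpha> \<beta> :: "nat \<Rightarrow> complex"
  assumes "\<And>j l. j < n \<Longrightarrow> l < n \<Longrightarrow> \<beta> j = \<beta> l \<Longrightarrow> j = l"
  shows "finite {t. \<not> inj_on (\<lambda>j. \<alpha> j - \<beta> j * t) {..<n}}"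
proof -
  have "{t. \<not> inj_on (\<lambda>j. \<alpha> j - \<beta> j * t) {..<n}} \<subseteq>
        (\<lambda>(j, l). (\<alpha> l - \<alpha> j) / (\<beta> l - \<beta> j)) ` ({..<n} \<times> {..<n})"
  proof
    fix t assume "t \<in> {t. \<not> inj_on (\<lambda>j. \<alpha> j - \<beta> j * t) {..<n}}"
    then obtain j l where jl: "j < n" "l < n" "j \<noteq> l" "\<alpha> j - \<beta> j * t = \<alpha> l - \<beta> l * t"
      unfolding inj_on_def by auto
    then have nz: "\<beta> l - \<beta> j \<noteq> 0" using assms by auto
    from jl(4) have "(\<beta> l - \<beta> j) * t = \<alpha> l - \<alpha> j" by (simp add: algebra_simps)
    then have "t = (\<alpha> l - \<alpha> j) / (\<beta> l - \<beta> j)" using nz by (simp add: field_simps)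
    then show "t \<in> (\<lambda>(j, l). (\<alpha> l - \<alpha> j) / (\<beta> l - \<beta> j)) ` ({..<n} \<times> {..<n})"
      using jl by auto
  qed
  then show ?thesis by (rule finite_subset) auto
qed

lemma gen_all:
  assumes "\<And>w::nat \<Rightarrow> complex. P w" "vars c \<subseteq> {..<k}" "\<And>w. P w \<Longrightarrow> eval c w = 0"
  shows "c = 0"
  using assms by (intro ident[where 'a=complex]) auto

lemma inj_inv_omega: "n > 0 \<Longrightarrow> inj_on (\<lambda>j. b - 1 / omega n ^ j) {..<n}"
  unfolding inj_on_def using omega_inj by (auto simp: field_simps)

lemma case_a:
  assumes m: "m \<ge> 2" and G: "special 1 m (\<lambda>_. 1) G"
  shows "\<exists>H. vars H \<subseteq> {..<1} \<and> invariant m (\<lambda>_. 1) H \<and> G = Var 0 ^ m - H + H * Var 0 ^ m"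
proof -
  have m0: "m > 0" using m by simp
  have L: "low 0 m (-1)" by (intro low_const vars_intros) (use m0 in auto)
  have Phieq: "Var 0 ^ m = 1 + Var 0 ^ m + (-1 :: mpoly)" by simp
  have inv: "invariant m (\<lambda>_. 1) (Var 0 ^ m)"
    unfolding invariant_omega by (simp add: eval_simps power_mult_distrib omega_pow_n[OF m0])
  have one: "eval (Var 0 ^ m) x = 1" if "(\<Sum>i<Suc 0. x i) = 1" for x :: "nat \<Rightarrow> complex"
    using that by (simp add: eval_simps)
  have gen: "c = 0" if "vars c \<subseteq> {..<0}" and
    h: "\<And>w. inj_on (\<lambda>j. (1 - (\<Sum>i<0. omega m ^ (j * 1) * w i)) / omega m ^ (j * 1)) {..<m} \<Longrightarrow> eval c w = 0"
    for c
  proof (rule gen_all[OF _ that(1) h])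
    fix w :: "nat \<Rightarrow> complex"
    show "inj_on (\<lambda>j. (1 - (\<Sum>i<0. omega m ^ (j * 1) * w i)) / omega m ^ (j * 1)) {..<m}"
      using inj_inv_omega[OF m0, of 0] unfolding inj_on_def by simp
  qed
  have G': "special (Suc 0) m (\<lambda>_. 1) G" using G by simp
  have e: "{..<Suc 0} = {..<1::nat}" by simp
  show ?thesis using main_thm[OF m0 L Phieq inv one gen G'] unfolding e .
qed

lemma case_b:
  assumes m: "m \<ge> 2" and G: "special 2 m (\<lambda>_. 1) G"
  shows "\<exists>H. vars H \<subseteq> {..<2} \<and> invariant m (\<lambda>_. 1) H \<and>
            G = (Var 0 + Var 1) ^ m - H + H * (Var 0 + Var 1) ^ m"
proof -
  have m0: "m > 0" using m by simp
  define L where "L = (\<Sum>i<m. (of_nat (m choose i) * Var 0 ^ (m - i)) * Var 1 ^ i) - (1::mpoly)"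
  have L: "low 1 m L" unfolding L_def
    by (intro low_diff low_sum low_term low_const vars_intros) (auto simp: m0)
  have Phieq: "(Var 0 + Var 1) ^ m = 1 + Var 1 ^ m + L"
  proof -
    have "(Var 0 + Var 1) ^ m = (Var 1 + Var 0 :: mpoly) ^ m" by (simp add: add.commute)
    also have "\<dots> = (\<Sum>i\<le>m. of_nat (m choose i) * Var 1 ^ i * Var 0 ^ (m - i))"
      by (rule binomial_ring)
    also have "\<dots> = Var 1 ^ m + (\<Sum>i<m. (of_nat (m choose i) * Var 0 ^ (m - i)) * Var 1 ^ i)"
      by (simp add: lessThan_Suc_atMost[symmetric] mult_ac)
    finally show ?thesis unfolding L_def by simp
  qed
  have inv: "invariant m (\<lambda>_. 1) ((Var 0 + Var 1) ^ m)"
    unfolding invariant_omega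
    by (simp add: eval_simps power_mult_distrib omega_pow_n[OF m0] flip: distrib_left)
  have one: "eval ((Var 0 + Var 1) ^ m) x = 1" if "(\<Sum>i<Suc 1. x i) = 1" for x :: "nat \<Rightarrow> complex"
    using that by (simp add: eval_simps)
  have gen: "c = 0" if "vars c \<subseteq> {..<1}" and
    h: "\<And>w. inj_on (\<lambda>j. (1 - (\<Sum>i<1. omega m ^ (j * 1) * w i)) / omega m ^ (j * 1)) {..<m} \<Longrightarrow> eval c w = 0"
    for c
  proof (rule gen_all[OF _ that(1) h])
    fix w :: "nat \<Rightarrow> complex"
    have "(1 - omega m ^ j * w 0) / omega m ^ j = 1 / omega m ^ j - w 0" for j
      by (simp add: field_simps)
    then show "inj_on (\<lambda>j. (1 - (\<Sum>i<1. omega m ^ (j * 1) * w i)) / omega m ^ (j * 1)) {..<m}"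
      using inj_inv_omega[OF m0, of 0] unfolding inj_on_def by (auto simp: field_simps)
  qed
  have G': "special (Suc 1) m (\<lambda>_. 1) G" using G by (simp add: numeral_2_eq_2)
  have e: "{..<Suc 1} = {..<2::nat}" by simp
  show ?thesis using main_thm[OF m0 L Phieq inv one gen G'] unfolding e .
qed



lemma klein_eval: "eval Klein_F x = x 0^7 + x 1^7 + x 2^7
     + 14 * (x 0^3*x 1^2 + x 0^2*x 2^3 + x 1^3*x 2^2 + x 0*x 1*x 2)
     + 7 * (x 0^5*x 1 + x 0*x 2^5 + x 1^5*x 2 + x 0*x 1^3 + x 0^3*x 2 + x 1*x 2^3)
     + 7 * (x 0*x 1^2*x 2^4 + x 0^2*x 1^4*x 2 + x 0^4*x 1*x 2^2 + x 0^2*x 1^2*x 2^2)"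
  by (simp add: Klein_F_def Let_def eval_simps)

lemma klein_one:
  fixes x y z :: complex
  assumes "x + y + z = 1"
  shows "x^7 + y^7 + z^7
     + 14 * (x^3*y^2 + x^2*z^3 + y^3*z^2 + x*y*z)
     + 7 * (x^5*y + x*z^5 + y^5*z + x*y^3 + x^3*z + y*z^3)
     + 7 * (x*y^2*z^4 + x^2*y^4*z + x^4*y*z^2 + x^2*y^2*z^2) = 1"
proof -
  have z: "z = 1 - x - y" using assms by (simp add: algebra_simps)
  show ?thesis unfolding z by algebra
qed

lemma klein_inv:
  fixes x y z u :: complex
  assumes "u^7 = 1"
  shows "(u*x)^7 + (u^2*y)^7 + (u^4*z)^7
     + 14 * ((u*x)^3*(u^2*y)^2 + (u*x)^2*(u^4*z)^3 + (u^2*y)^3*(u^4*z)^2 + (u*x)*(u^2*y)*(u^4*z))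
     + 7 * ((u*x)^5*(u^2*y) + (u*x)*(u^4*z)^5 + (u^2*y)^5*(u^4*z) + (u*x)*(u^2*y)^3 + (u*x)^3*(u^4*z) + (u^2*y)*(u^4*z)^3)
     + 7 * ((u*x)*(u^2*y)^2*(u^4*z)^4 + (u*x)^2*(u^2*y)^4*(u^4*z) + (u*x)^4*(u^2*y)*(u^4*z)^2 + (u*x)^2*(u^2*y)^2*(u^4*z)^2)
   = x^7 + y^7 + z^7
     + 14 * (x^3*y^2 + x^2*z^3 + y^3*z^2 + x*y*z)
     + 7 * (x^5*y + x*z^5 + y^5*z + x*y^3 + x^3*z + y*z^3)
     + 7 * (x*y^2*z^4 + x^2*y^4*z + x^4*y*z^2 + x^2*y^2*z^2)"
proof -
  have p: "u^(7*q + r) = u^r" for q r by (simp add: power_add power_mult assms)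
  have u14: "u^14 = 1" "u^21 = 1" "u^28 = 1" using p[of 2 0] p[of 3 0] p[of 4 0] by simp_all
  show ?thesis using assms by algebra
qed

lemma low_term1: "vars q \<subseteq> {..<k} \<Longrightarrow> 1 < n \<Longrightarrow> low k n (q * Var k)"
  using low_term[of q k 1 n] by simp

lemma gen_last:
  fixes \<alpha> \<beta> :: "(nat \<Rightarrow> complex) \<Rightarrow> nat \<Rightarrow> complex" and k n :: nat
  assumes vc: "vars c \<subseteq> {..<Suc k}"
    and h: "\<And>w. inj_on (\<lambda>j. \<alpha> w j - \<beta> w j * w k) {..<n} \<Longrightarrow> eval c w = 0"
    and ab: "\<And>w t j. \<alpha> (w(k := t)) j = \<alpha> w j" "\<And>w t j. \<beta> (w(k := t)) j = \<beta> w j"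
    and binj: "\<And>w j l. j < n \<Longrightarrow> l < n \<Longrightarrow> \<beta> w j = \<beta> w l \<Longrightarrow> j = l"
  shows "c = 0"
proof (rule ident[where 'a=complex, OF vc])
  fix w :: "nat \<Rightarrow> complex"
  define f where "f t = eval c (w(k := t))" for t
  have fin: "finite {t. \<not> inj_on (\<lambda>j. \<alpha> w j - \<beta> w j * t) {..<n}}"
    by (rule finite_bad) (use binj in blast)
  have "f s = 0" if "s \<notin> {t. \<not> inj_on (\<lambda>j. \<alpha> w j - \<beta> w j * t) {..<n}}" for s
    unfolding f_def using that by (intro h) (simp add: ab)
  moreover have "isCont f (w k)" unfolding f_def by (intro isCont_eval isCont_upd)
  ultimately have "f (w k) = 0" using zero_off_finite fin by blast
  then show "eval c w = 0" unfolding f_def by simp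
qed

lemma omega7_sq_inj: "j < 7 \<Longrightarrow> l < 7 \<Longrightarrow> omega 7 ^ (j * 2) = omega 7 ^ (l * 2) \<Longrightarrow> j = l"
proof -
  assume jl: "j < 7" "l < 7" and e: "omega 7 ^ (j * 2) = omega 7 ^ (l * 2)"
  have r: "(omega 7 ^ (i * 2)) ^ 4 = omega 7 ^ i" for i :: nat
  proof -
    have ii: "i * 2 * 4 = 7 * i + i" by simp
    have "(omega 7 ^ (i * 2)) ^ 4 = omega 7 ^ (7 * i + i)" by (metis power_mult ii)
    also have "\<dots> = omega 7 ^ i"
      using omega_n[of 7] by (simp only: power_add power_mult) simp
    finally show ?thesis .
  qed
  from e have "(omega 7 ^ (j * 2)) ^ 4 = (omega 7 ^ (l * 2)) ^ 4" by simp
  then have "omega 7 ^ j = omega 7 ^ l" using r by simp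
  then show "j = l" using omega_inj[of 7 j l] jl by simp
qed

lemma div_aux: "(d::complex) \<noteq> 0 \<Longrightarrow> (1 - (a + b * w)) / d = (1 - a) / d - b / d * w"
  by (simp add: field_simps)

lemma case_d:
  assumes G: "special 3 7 (\<lambda>i. 2 ^ i) G"
  shows "\<exists>H. vars H \<subseteq> {..<3} \<and> invariant 7 (\<lambda>i. 2 ^ i) H \<and> G = Klein_F - H + H * Klein_F"
proof -
  define L where "L = Klein_F - 1 - Var 2 ^ 7"
  have Phieq: "Klein_F = 1 + Var 2 ^ 7 + L" unfolding L_def by simp
  have Lexp: "L = Var 0 ^ 7 + Var 1 ^ 7 - 1
     + Const 14 * (Var 0^3*Var 1^2 + Var 0^2*Var 2^3 + Var 1^3*Var 2^2 + Var 0*Var 1*Var 2)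
     + Const 7 * (Var 0^5*Var 1 + Var 0*Var 2^5 + Var 1^5*Var 2 + Var 0*Var 1^3 + Var 0^3*Var 2 + Var 1*Var 2^3)
     + Const 7 * (Var 0*Var 1^2*Var 2^4 + Var 0^2*Var 1^4*Var 2 + Var 0^4*Var 1*Var 2^2 + Var 0^2*Var 1^2*Var 2^2)"
    unfolding L_def Klein_F_def Let_def Const_def by (simp add: algebra_simps)
  have L: "low 2 7 L" unfolding Lexp
    by (intro low_add low_diff low_term low_term1 low_cmult low_const vars_intros) auto
  have inv: "invariant 7 (\<lambda>i. 2 ^ i) Klein_F"
    unfolding invariant_omega
  proof (intro allI)
    fix j and x :: "nat \<Rightarrow> complex"
    have u7: "(omega 7 ^ j) ^ 7 = 1" by (rule omega_pow_n) simp
    show "eval Klein_F (\<lambda>i. omega 7 ^ (j * 2 ^ i) * x i) = eval Klein_F x"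
      unfolding klein_eval using klein_inv[OF u7, of "x 0" "x 1" "x 2"]
      by (simp add: power_mult)
  qed
  have one: "eval Klein_F x = 1" if "(\<Sum>i<Suc 2. x i) = 1" for x :: "nat \<Rightarrow> complex"
  proof -
    have "{..<Suc 2} = {0, 1, 2::nat}" by auto
    then have "x 0 + x 1 + x 2 = 1" using that by (simp add: add.assoc)
    then show ?thesis unfolding klein_eval by (rule klein_one)
  qed
  have gen: "c = 0" if vc: "vars c \<subseteq> {..<2}" and
    h: "\<And>w. inj_on (\<lambda>j. (1 - (\<Sum>i<2. omega 7 ^ (j * 2 ^ i) * w i)) / omega 7 ^ (j * 2 ^ 2)) {..<7} \<Longrightarrow> eval c w = 0"
    for c
  proof (rule gen_last[where k=1 and n=7])
    show "vars c \<subseteq> {..<Suc 1}" using vc by (simp add: numeral_2_eq_2)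
  next
    fix w :: "nat \<Rightarrow> complex"
    assume "inj_on (\<lambda>j. (1 - omega 7 ^ j * w 0) / omega 7 ^ (j * 4) - omega 7 ^ (j * 2) / omega 7 ^ (j * 4) * w 1) {..<7}"
    moreover have "(1 - (\<Sum>i<2. omega 7 ^ (j * 2 ^ i) * w i)) / omega 7 ^ (j * 2 ^ 2) =
        (1 - omega 7 ^ j * w 0) / omega 7 ^ (j * 4) - omega 7 ^ (j * 2) / omega 7 ^ (j * 4) * w 1" for j
    proof -
      have "(\<Sum>i<2. omega 7 ^ (j * 2 ^ i) * w i) = omega 7 ^ j * w 0 + omega 7 ^ (j * 2) * w 1"
        by (simp add: numeral_2_eq_2)
      moreover have "j * 2 ^ 2 = j * 4" by simp
      ultimately show ?thesis using div_aux[of "omega 7 ^ (j * 4)" "omega 7 ^ j * w 0" "omega 7 ^ (j * 2)" "w 1"]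
        by simp
    qed
    ultimately show "eval c w = 0" by (intro h) simp
  next
    fix w :: "nat \<Rightarrow> complex" and t j
    show "(1 - omega 7 ^ j * (w(1 := t)) 0) / omega 7 ^ (j * 4) = (1 - omega 7 ^ j * w 0) / omega 7 ^ (j * 4)" by simp
    show "omega 7 ^ (j * 2) / omega 7 ^ (j * 4) = omega 7 ^ (j * 2) / omega 7 ^ (j * 4)" by simp
  next
    fix w and j l :: nat
    assume jl: "j < 7" "l < 7" and e: "omega 7 ^ (j * 2) / omega 7 ^ (j * 4) = omega 7 ^ (l * 2) / omega 7 ^ (l * 4)"
    have "omega 7 ^ (i * 2) / omega 7 ^ (i * 4) = 1 / omega 7 ^ (i * 2)" for i :: nat
      by (simp add: field_simps flip: power_add)
    then have "omega 7 ^ (j * 2) = omega 7 ^ (l * 2)" using e by simp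
    then show "j = l" using omega7_sq_inj jl by blast
  qed
  have G': "special (Suc 2) 7 (\<lambda>i. 2 ^ i) G" using G by (simp add: numeral_3_eq_3)
  have e: "{..<Suc 2} = {..<3::nat}" by simp
  have z7: "0 < (7::nat)" by simp
  show ?thesis using main_thm[OF z7 L Phieq inv one gen G'] unfolding e .
qed



definition U :: "nat \<Rightarrow> complex \<Rightarrow> complex \<Rightarrow> complex" where
  "U m s q = (\<Sum>j\<le>m. of_nat ((m - j) choose j) * q ^ j * s ^ (m - 2 * j))"

lemma pascal_aux: "i \<le> Suc m \<Longrightarrow> (Suc m - i) choose (Suc i) = ((m - i) choose i) + ((m - i) choose (Suc i))"
proof (cases "i \<le> m")
  case True
  then have "Suc m - i = Suc (m - i)" by simp
  then show ?thesis by simp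
next
  case False
  assume "i \<le> Suc m"
  with False have "i = Suc m" by simp
  then show ?thesis by simp
qed

lemma U_rec: "U (Suc (Suc m)) s q = s * U (Suc m) s q + q * U m s q"
proof -
  define A where "A = (\<Sum>i\<le>Suc m. of_nat ((m - i) choose i) * q ^ Suc i * s ^ (m - 2 * i))"
  define B where "B = (\<Sum>i\<le>Suc m. of_nat ((m - i) choose (Suc i)) * q ^ Suc i * s ^ (m - 2 * i))"
  have "U (Suc (Suc m)) s q = s ^ Suc (Suc m) +
      (\<Sum>i\<le>Suc m. of_nat ((Suc m - i) choose (Suc i)) * q ^ Suc i * s ^ (m - 2 * i))"
    unfolding U_def by (subst sum.atMost_Suc_shift) simp
  also have "(\<Sum>i\<le>Suc m. of_nat ((Suc m - i) choose (Suc i)) * q ^ Suc i * s ^ (m - 2 * i)) = A + B"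
    unfolding A_def B_def sum.distrib[symmetric]
    by (rule sum.cong[OF refl]) (simp add: pascal_aux distrib_right)
  finally have U2: "U (Suc (Suc m)) s q = s ^ Suc (Suc m) + A + B" by (simp add: add.assoc)
  have "A = q * (\<Sum>i\<le>Suc m. of_nat ((m - i) choose i) * q ^ i * s ^ (m - 2 * i))"
    unfolding A_def sum_distrib_left by (rule sum.cong) (simp_all add: mult_ac)
  also have "(\<Sum>i\<le>Suc m. of_nat ((m - i) choose i) * q ^ i * s ^ (m - 2 * i)) = U m s q"
    unfolding U_def by simp
  finally have A: "A = q * U m s q" .
  have "s * U (Suc m) s q = s ^ Suc (Suc m) +
      (\<Sum>i\<le>m. of_nat ((m - i) choose (Suc i)) * q ^ Suc i * (s * s ^ (Suc m - 2 * Suc i)))"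
    unfolding U_def sum_distrib_left by (subst sum.atMost_Suc_shift) (simp add: mult_ac)
  also have "(\<Sum>i\<le>m. of_nat ((m - i) choose (Suc i)) * q ^ Suc i * (s * s ^ (Suc m - 2 * Suc i))) =
      (\<Sum>i\<le>m. of_nat ((m - i) choose (Suc i)) * q ^ Suc i * s ^ (m - 2 * i))"
  proof (rule sum.cong[OF refl])
    fix i
    show "of_nat ((m - i) choose (Suc i)) * q ^ Suc i * (s * s ^ (Suc m - 2 * Suc i)) =
      of_nat ((m - i) choose (Suc i)) * q ^ Suc i * s ^ (m - 2 * i)"
    proof (cases "Suc i \<le> m - i")
      case True
      then have "Suc (Suc m - 2 * Suc i) = m - 2 * i" by simp
      then have "s * s ^ (Suc m - 2 * Suc i) = s ^ (m - 2 * i)" by (metis power_Suc)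
      then show ?thesis by simp
    next
      case False
      then show ?thesis by simp
    qed
  qed
  also have "(\<Sum>i\<le>m. of_nat ((m - i) choose (Suc i)) * q ^ Suc i * s ^ (m - 2 * i)) = B"
    unfolding B_def by simp
  finally have B: "s * U (Suc m) s q = s ^ Suc (Suc m) + B" .
  show ?thesis using U2 A B by (simp add: algebra_simps)
qed

lemma U_0: "U 0 s q = 1" by (simp add: U_def)
lemma U_1: "U 1 s q = s" by (simp add: U_def)
lemma U_Suc0: "U (Suc 0) s q = s" by (simp add: U_def)

lemma waring:
  fixes a b :: complex
  shows "a ^ (m + 2) + b ^ (m + 2) = U (m + 2) (a + b) (- (a * b)) + (- (a * b)) * U m (a + b) (- (a * b))"
proof (induction m rule: less_induct)
  case (less m)
  let ?s = "a + b" and ?q = "- (a * b)"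
  show ?case
  proof (cases m)
    case 0
    then show ?thesis
      by (simp add: U_rec[of 0] U_0 U_Suc0 numeral_2_eq_2) (simp add: algebra_simps power2_eq_square)
  next
    case (Suc m1)
    show ?thesis
    proof (cases m1)
      case 0
      then show ?thesis using Suc
        by (simp add: U_rec U_0 U_Suc0 numeral_3_eq_3) (simp add: algebra_simps power2_eq_square power3_eq_cube)
    next
      case (Suc k)
      then have m: "m = Suc (Suc k)" using \<open>m = Suc m1\<close> by simp
      have IH1: "a ^ (k + 2) + b ^ (k + 2) = U (k + 2) ?s ?q + ?q * U k ?s ?q" using less m by simp
      have IH2: "a ^ (k + 3) + b ^ (k + 3) = U (k + 3) ?s ?q + ?q * U (k + 1) ?s ?q"
        using less[of "k + 1"] m by (simp add: numeral_3_eq_3)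
      have rec: "a ^ (k + 4) + b ^ (k + 4) = ?s * (a ^ (k + 3) + b ^ (k + 3)) + ?q * (a ^ (k + 2) + b ^ (k + 2))"
        by (simp add: algebra_simps power_add numeral_3_eq_3 numeral_2_eq_2 eval_nat_numeral)
      have u1: "U (k + 4) ?s ?q = ?s * U (k + 3) ?s ?q + ?q * U (k + 2) ?s ?q"
        using U_rec[of "k + 2"] by (simp add: eval_nat_numeral)
      have u2: "U (k + 2) ?s ?q = ?s * U (k + 1) ?s ?q + ?q * U k ?s ?q"
        using U_rec[of k] by (simp add: eval_nat_numeral)
      have "a ^ (m + 2) + b ^ (m + 2) = a ^ (k + 4) + b ^ (k + 4)" using m by (simp add: eval_nat_numeral)
      also have "\<dots> = U (k + 4) ?s ?q + ?q * U (k + 2) ?s ?q"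
        unfolding rec IH1 IH2 u1 u2 by (simp add: algebra_simps)
      also have "\<dots> = U (m + 2) ?s ?q + ?q * U m ?s ?q" using m by (simp add: eval_nat_numeral)
      finally show ?thesis .
    qed
  qed
qed

lemma sum_split0: "(\<Sum>j\<le>r. f j) = f 0 + (\<Sum>j=1..r. f j)" for f :: "nat \<Rightarrow> complex"
proof -
  have "{..r} = insert 0 {1..r}" by auto
  then show ?thesis by simp
qed

lemma cc_eq:
  assumes "1 \<le> j" "j \<le> r"
  shows "real ((2*r+1-j) choose j) + real ((2*r-j) choose (j-1)) = cc r j"
proof -
  obtain k where k: "j = Suc k" using assms by (cases j) auto
  define N where "N = 2*r - j"
  have N1: "2*r+1-j = Suc N" using assms by (simp add: N_def)
  have k1: "j - 1 = k" using k by simp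
  have e0: "Suc k * (Suc N choose Suc k) = Suc N * (N choose k)"
    by (metis Suc_times_binomial_eq mult.commute)
  have e1: "real (Suc k) * real (Suc N choose Suc k) = real (Suc N) * real (N choose k)"
    using arg_cong[OF e0, of real] by (simp only: of_nat_mult)
  have jpos: "real (Suc k) > 0" by simp
  have le: "Suc k \<le> 2*r+1" using assms k by simp
  have "real (Suc N) = real (2*r+1 - Suc k)" by (metis N1 k)
  also have "\<dots> = real (2*r+1) - real (Suc k)" by (rule of_nat_diff[OF le])
  finally have rj: "real (Suc N) = real (2*r+1) - real (Suc k)" .
  have "real (Suc N choose Suc k) = real (Suc N) * real (N choose k) / real (Suc k)"
    using e1 jpos by (simp add: field_simps)
  then have "real (Suc N choose Suc k) + real (N choose k) = real (2*r+1) / real (Suc k) * real (N choose k)"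
    unfolding rj using jpos by (simp add: field_simps)
  then show ?thesis unfolding cc_def N1 k1 N_def[symmetric] unfolding k by (simp del: binomial_Suc_Suc)
qed

lemma V_form:
  assumes r: "r \<ge> 1"
  shows "U (2*r+1) s q + q * U (2*r-1) s q =
     s ^ (2*r+1) + (\<Sum>j=1..r. of_real (cc r j) * s ^ (2*r+1-2*j) * q ^ j)"
proof -
  have A: "U (2*r+1) s q = s ^ (2*r+1) + (\<Sum>j=1..r. of_nat ((2*r+1-j) choose j) * q ^ j * s ^ (2*r+1-2*j))"
  proof -
    have "U (2*r+1) s q = (\<Sum>j\<le>r. of_nat ((2*r+1-j) choose j) * q ^ j * s ^ (2*r+1-2*j))"
      unfolding U_def
      by (rule sum.mono_neutral_right) auto
    then show ?thesis by (simp add: sum_split0)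
  qed
  have B: "q * U (2*r-1) s q = (\<Sum>j=1..r. of_nat ((2*r-j) choose (j-1)) * q ^ j * s ^ (2*r+1-2*j))"
  proof -
    obtain r1 where r1: "r = Suc r1" using r by (cases r) auto
    have "U (2*r-1) s q = (\<Sum>i\<le>r1. of_nat ((2*r-1-i) choose i) * q ^ i * s ^ (2*r-1-2*i))"
      unfolding U_def by (rule sum.mono_neutral_right) (auto simp: r1)
    then have "q * U (2*r-1) s q = (\<Sum>i=0..r1. of_nat ((2*r-1-i) choose i) * q ^ Suc i * s ^ (2*r-1-2*i))"
      by (simp add: sum_distrib_left atMost_atLeast0 mult_ac)
    also have "\<dots> = (\<Sum>i=0..r1. of_nat ((2*r-Suc i) choose (Suc i - 1)) * q ^ Suc i * s ^ (2*r+1-2*Suc i))"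
      by (rule sum.cong[OF refl]) (auto simp: r1)
    also have "\<dots> = (\<Sum>j=Suc 0..Suc r1. of_nat ((2*r-j) choose (j-1)) * q ^ j * s ^ (2*r+1-2*j))"
      by (rule sum.shift_bounds_cl_Suc_ivl[symmetric])
    finally show ?thesis by (simp add: r1)
  qed
  have "U (2*r+1) s q + q * U (2*r-1) s q = s ^ (2*r+1) +
      (\<Sum>j=1..r. (of_nat ((2*r+1-j) choose j) + of_nat ((2*r-j) choose (j-1))) * q ^ j * s ^ (2*r+1-2*j))"
    unfolding A B by (simp add: distrib_right sum.distrib)
  also have "\<dots> = s ^ (2*r+1) + (\<Sum>j=1..r. of_real (cc r j) * s ^ (2*r+1-2*j) * q ^ j)"
  proof -
    have "(of_nat ((2*r+1-j) choose j) + of_nat ((2*r-j) choose (j-1)) :: complex) = of_real (cc r j)"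
      if "j \<in> {1..r}" for j
    proof -
      have "(of_nat ((2*r+1-j) choose j) + of_nat ((2*r-j) choose (j-1)) :: complex)
          = of_real (real ((2*r+1-j) choose j) + real ((2*r-j) choose (j-1)))" by simp
      also have "\<dots> = of_real (cc r j)" using cc_eq[of j r] that by simp
      finally show ?thesis .
    qed
    then show ?thesis by (intro arg_cong2[where f="(+)"] refl sum.cong) (auto simp: mult_ac)
  qed
  finally show ?thesis .
qed

lemma fodd_one:
  fixes x y :: complex
  assumes r: "r \<ge> 1" and xy: "x + y = 1"
  shows "x ^ (2*r+1) + y ^ (2*r+1) + (\<Sum>j=1..r. of_real (cc r j) * x ^ (2*r+1-2*j) * y ^ j) = 1"
proof -
  have m: "2*r-1 + 2 = 2*r+1" using r by simp
  have e1: "1 + (x - 1) = x" by simp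
  have e2: "- (1 * (x - 1)) = y" using xy by (simp add: algebra_simps)
  have w: "1 ^ (2*r+1) + (x - 1) ^ (2*r+1) = U (2*r+1) x y + y * U (2*r-1) x y"
    using waring[where a=1 and b="x - 1" and m="2*r-1"] unfolding m e1 e2 .
  have "(x - 1) ^ (2*r+1) = - (y ^ (2*r+1))"
  proof -
    have "x - 1 = - y" using xy by (simp add: algebra_simps)
    then show ?thesis by (simp add: power_minus_odd)
  qed
  note neg = this
  let ?S = "(\<Sum>j=1..r. of_real (cc r j) * x ^ (2*r+1-2*j) * y ^ j)"
  have "x ^ (2*r+1) + y ^ (2*r+1) + ?S = (x ^ (2*r+1) + ?S) + y ^ (2*r+1)" by (simp only: add_ac)
  also have "\<dots> = (U (2*r+1) x y + y * U (2*r-1) x y) + y ^ (2*r+1)" by (simp only: V_form[OF r])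
  also have "\<dots> = (1 ^ (2*r+1) + (x - 1) ^ (2*r+1)) + y ^ (2*r+1)" by (simp only: w)
  also have "\<dots> = 1" by (simp only: neg power_one) simp
  finally show ?thesis .
qed

lemma fodd_eval: "eval (f_odd r) x = x 0 ^ (2*r+1) + x 1 ^ (2*r+1)
    + (\<Sum>j=1..r. of_real (cc r j) * x 0 ^ (2*r+1-2*j) * x 1 ^ j)"
  by (simp add: f_odd_def eval_simps)

lemma term_inv:
  fixes u a b c :: complex
  assumes u: "u ^ (2*r+1) = 1" and i: "i \<le> r"
  shows "c * (u * a) ^ (2*r+1-2*i) * (u ^ 2 * b) ^ i = c * a ^ (2*r+1-2*i) * b ^ i"
proof -
  have "(u * a) ^ (2*r+1-2*i) * (u ^ 2 * b) ^ i = u ^ (2*r+1-2*i + 2*i) * (a ^ (2*r+1-2*i) * b ^ i)"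
    by (simp add: power_mult_distrib power_add power_mult[symmetric] mult_ac)
  also have "2*r+1-2*i + 2*i = 2*r+1" using i by simp
  finally show ?thesis using u by (simp add: mult.assoc)
qed

lemma div_aux2: "(d::complex) \<noteq> 0 \<Longrightarrow> (1 - b * w) / d = 1 / d - b / d * w"
  by (simp add: field_simps)

lemma case_c:
  assumes r: "r \<ge> 1" and G: "special 2 (2*r+1) (\<lambda>i. i + 1) G"
  shows "\<exists>H. vars H \<subseteq> {..<2} \<and> invariant (2*r+1) (\<lambda>i. i + 1) H \<and> G = f_odd r - H + H * f_odd r"
proof -
  have n0: "0 < 2*r+1" by simp
  define L where "L = Var 0 ^ (2*r+1) - 1 + (\<Sum>j=1..r. (Const (cc r j) * Var 0 ^ (2*r+1-2*j)) * Var 1 ^ j)"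
  have Phieq: "f_odd r = 1 + Var 1 ^ (2*r+1) + L" unfolding L_def f_odd_def by (simp add: algebra_simps)
  have L: "low 1 (2*r+1) L" unfolding L_def
    by (intro low_add low_diff low_sum low_term low_const vars_intros) auto
  have inv: "invariant (2*r+1) (\<lambda>i. i + 1) (f_odd r)"
    unfolding invariant_omega
  proof (intro allI)
    fix j and x :: "nat \<Rightarrow> complex"
    define u where "u = omega (2*r+1) ^ j"
    have u: "u ^ (2*r+1) = 1" unfolding u_def by (rule omega_pow_n) simp
    have x0: "omega (2*r+1) ^ (j * (0 + 1)) * x 0 = u * x 0" unfolding u_def by simp
    have x1: "omega (2*r+1) ^ (j * (1 + 1)) * x 1 = u ^ 2 * x 1" 
    proof -
      have "omega (2*r+1) ^ (j * (1 + 1)) = u ^ 2" unfolding u_def by (metis one_add_one power_mult)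
      then show ?thesis by simp
    qed
    have "(u ^ 2 * x 1) ^ (2*r+1) = (u ^ (2*r+1)) ^ 2 * x 1 ^ (2*r+1)"
      by (simp add: power_mult_distrib power_mult[symmetric] mult.commute)
    then have y: "(u ^ 2 * x 1) ^ (2*r+1) = x 1 ^ (2*r+1)" using u by simp
    have xx: "(u * x 0) ^ (2*r+1) = x 0 ^ (2*r+1)" using u by (simp add: power_mult_distrib)
    have s: "(\<Sum>i=1..r. of_real (cc r i) * (u * x 0) ^ (2*r+1-2*i) * (u ^ 2 * x 1) ^ i) =
             (\<Sum>i=1..r. of_real (cc r i) * x 0 ^ (2*r+1-2*i) * x 1 ^ i)"
      by (rule sum.cong[OF refl]) (rule term_inv[OF u], simp)
    show "eval (f_odd r) (\<lambda>i. omega (2*r+1) ^ (j * (i + 1)) * x i) = eval (f_odd r) x"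
      unfolding fodd_eval x0 x1 y xx s by simp
  qed
  have one: "eval (f_odd r) x = 1" if "(\<Sum>i<Suc 1. x i) = 1" for x :: "nat \<Rightarrow> complex"
    unfolding fodd_eval by (rule fodd_one[OF r]) (use that in simp)
  have gen: "c = 0" if vc: "vars c \<subseteq> {..<1}" and
    h: "\<And>w. inj_on (\<lambda>j. (1 - (\<Sum>i<1. omega (2*r+1) ^ (j * (i + 1)) * w i)) / omega (2*r+1) ^ (j * (1 + 1))) {..<2*r+1} \<Longrightarrow> eval c w = 0"
    for c
  proof (rule gen_last[where k=0 and n="2*r+1" and \<alpha>="\<lambda>w j. 1 / omega (2*r+1) ^ (j * 2)"
        and \<beta>="\<lambda>w j. omega (2*r+1) ^ j / omega (2*r+1) ^ (j * 2)"])
    show "vars c \<subseteq> {..<Suc 0}" using vc by simp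
  next
    fix w :: "nat \<Rightarrow> complex"
    assume a: "inj_on (\<lambda>j. 1 / omega (2*r+1) ^ (j * 2) - omega (2*r+1) ^ j / omega (2*r+1) ^ (j * 2) * w 0) {..<2*r+1}"
    have "(1 - (\<Sum>i<1. omega (2*r+1) ^ (j * (i + 1)) * w i)) / omega (2*r+1) ^ (j * (1 + 1)) =
        1 / omega (2*r+1) ^ (j * 2) - omega (2*r+1) ^ j / omega (2*r+1) ^ (j * 2) * w 0" for j
      using div_aux2[of "omega (2*r+1) ^ (j * 2)" "omega (2*r+1) ^ j" "w 0"] unfolding one_add_one by simp
    then show "eval c w = 0" using a by (intro h) simp
  next
    fix j l :: nat and w :: "nat \<Rightarrow> complex"
    assume jl: "j < 2*r+1" "l < 2*r+1" and e: "omega (2*r+1) ^ j / omega (2*r+1) ^ (j * 2) = omega (2*r+1) ^ l / omega (2*r+1) ^ (l * 2)"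
    have "omega (2*r+1) ^ i / omega (2*r+1) ^ (i * 2) = 1 / omega (2*r+1) ^ i" for i :: nat
      by (simp add: field_simps power_mult power2_eq_square)
    then have "omega (2*r+1) ^ j = omega (2*r+1) ^ l" using e by simp
    then show "j = l" using omega_inj[OF n0 jl] by simp
  qed simp_all
  have G': "special (Suc 1) (2*r+1) (\<lambda>i. i + 1) G" using G by (simp add: numeral_2_eq_2)
  have e: "{..<Suc 1} = {..<2::nat}" by simp
  show ?thesis using main_thm[OF n0 L Phieq inv one gen G'] unfolding e .
qed

theorem proposition2p1:
  shows
   "(\<forall>m G. m \<ge> 2 \<longrightarrow> special 1 m (\<lambda>_. 1) G \<longrightarrow>
       (\<exists>H. vars H \<subseteq> {..<1} \<and> invariant m (\<lambda>_. 1) H \<and>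
            G = Var 0 ^ m - H + H * Var 0 ^ m))
  \<and> (\<forall>m G. m \<ge> 2 \<longrightarrow> special 2 m (\<lambda>_. 1) G \<longrightarrow>
       (\<exists>H. vars H \<subseteq> {..<2} \<and> invariant m (\<lambda>_. 1) H \<and>
            G = (Var 0 + Var 1) ^ m - H + H * (Var 0 + Var 1) ^ m))
  \<and> (\<forall>r G. r \<ge> 1 \<longrightarrow> special 2 (2*r+1) (\<lambda>i. i + 1) G \<longrightarrow>
       (\<exists>H. vars H \<subseteq> {..<2} \<and> invariant (2*r+1) (\<lambda>i. i + 1) H \<and>
            G = f_odd r - H + H * f_odd r))
  \<and> (\<forall>G. special 3 7 (\<lambda>i. 2 ^ i) G \<longrightarrow>
       (\<exists>H. vars H \<subseteq> {..<3} \<and> invariant 7 (\<lambda>i. 2 ^ i) H \<and>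
            G = Klein_F - H + H * Klein_F))"
  using case_a case_b case_c case_d by blast

end
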